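(* Let $\mathcal{H}$ and $\mathcal{H}'$ be two hypertrees with the same vertex set. Then they are equivalent if and only if $\mathcal{H}'$ can be obtained from $\mathcal{H}$ by a finite sequence of the following operations: removing/adding an edge with exactly one vertex; removing/adding an edge equal to the whole vertex set; adding an edge with the same vertices as an existing edge; removing an edge for which another edge with the same vertices exists; adding an edge that is the nonempty intersection of some edges; adding an edge that is the union of two non-disjoint edges; adding an edge that is the connected union of some edges; removing an edge that is the intersection of other edges; removing an edge that is the connected union of other edges.
   Context: A hypergraph has a finite vertex set and a finite family (repetitions allowed) of nonempty subsets of it (edges). A host tree is a tree on the vertex set in which every edge induces a connected subgraph; a hypertree is a hypergraph with a host tree. Hypergraphs on the same vertex set are equivalent if they have the same host trees. A union of sets is connected if the intersection graph of the sets is connected. *)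

theory Defs
  imports Main "HOL-Library.Multiset"
begin

definition graph_on :: "'a set \<Rightarrow> 'a set set \<Rightarrow> bool" where
  "graph_on V T \<longleftrightarrow> (\<forall>t\<in>T. \<exists>u v. u \<in> V \<and> v \<in> V \<and> u \<noteq> v \<and> t = {u, v})"

definition induced_connected :: "'a set set \<Rightarrow> 'a set \<Rightarrow> bool" where
  "induced_connected T S \<longleftrightarrow>
     (\<forall>u\<in>S. \<forall>v\<in>S. (\<lambda>x y. x \<in> S \<and> y \<in> S \<and> {x, y} \<in> T)\<^sup>*\<^sup>* u v)"

definition has_cycle :: "'a set set \<Rightarrow> bool" where
  "has_cycle T \<longleftrightarrow> (\<exists>vs. distinct vs \<and> length vs \<ge> 3 \<and>
      (\<forall>i < length vs. {vs ! i, vs ! (Suc i mod length vs)} \<in> T))"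

definition is_tree :: "'a set \<Rightarrow> 'a set set \<Rightarrow> bool" where
  "is_tree V T \<longleftrightarrow> V \<noteq> {} \<and> graph_on V T \<and> induced_connected T V \<and> \<not> has_cycle T"

definition hypergraph :: "'a set \<Rightarrow> 'a set multiset \<Rightarrow> bool" where
  "hypergraph V E \<longleftrightarrow> finite V \<and> (\<forall>e\<in>#E. e \<noteq> {} \<and> e \<subseteq> V)"

definition host_tree :: "'a set \<Rightarrow> 'a set multiset \<Rightarrow> 'a set set \<Rightarrow> bool" where
  "host_tree V E T \<longleftrightarrow> is_tree V T \<and> (\<forall>e\<in>#E. induced_connected T e)"

definition hypertree :: "'a set \<Rightarrow> 'a set multiset \<Rightarrow> bool" where
  "hypertree V E \<longleftrightarrow> hypergraph V E \<and> (\<exists>T. host_tree V E T)"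

definition equivalent :: "'a set \<Rightarrow> 'a set multiset \<Rightarrow> 'a set multiset \<Rightarrow> bool" where
  "equivalent V E E' \<longleftrightarrow> (\<forall>T. host_tree V E T \<longleftrightarrow> host_tree V E' T)"

definition connected_union :: "'a set multiset \<Rightarrow> bool" where
  "connected_union F \<longleftrightarrow>
     (\<forall>A\<in>#F. \<forall>B\<in>#F. (\<lambda>X Y. X \<in># F \<and> Y \<in># F \<and> X \<inter> Y \<noteq> {})\<^sup>*\<^sup>* A B)"

definition hyper_op :: "'a set \<Rightarrow> 'a set multiset \<Rightarrow> 'a set multiset \<Rightarrow> bool" where
  "hyper_op V E E' \<longleftrightarrow>
     \<comment> \<open>add / remove an edge with exactly one vertex\<close>
     (\<exists>e. e \<subseteq> V \<and> card e = 1 \<and> E' = add_mset e E) \<or>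
     (\<exists>e. e \<in># E \<and> card e = 1 \<and> E' = E - {#e#}) \<or>
     \<comment> \<open>add / remove an edge equal to the whole vertex set\<close>
     (V \<noteq> {} \<and> E' = add_mset V E) \<or>
     (V \<in># E \<and> E' = E - {#V#}) \<or>
     \<comment> \<open>add a copy of an existing edge\<close>
     (\<exists>e. e \<in># E \<and> E' = add_mset e E) \<or>
     \<comment> \<open>remove an edge of which another copy exists\<close>
     (\<exists>e. count E e \<ge> 2 \<and> E' = E - {#e#}) \<or>
     \<comment> \<open>add a nonempty intersection of some edges\<close>
     (\<exists>F. F \<subseteq># E \<and> F \<noteq> {#} \<and> \<Inter>(set_mset F) \<noteq> {} \<and> E' = add_mset (\<Inter>(set_mset F)) E) \<or>
     \<comment> \<open>add the union of two non-disjoint edges\<close>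
     (\<exists>e1 e2. {#e1, e2#} \<subseteq># E \<and> e1 \<inter> e2 \<noteq> {} \<and> E' = add_mset (e1 \<union> e2) E) \<or>
     \<comment> \<open>add a connected union of some edges\<close>
     (\<exists>F. F \<subseteq># E \<and> F \<noteq> {#} \<and> connected_union F \<and> E' = add_mset (\<Union>(set_mset F)) E) \<or>
     \<comment> \<open>remove an edge that is the intersection of other edges\<close>
     (\<exists>e F. e \<in># E \<and> F \<subseteq># E - {#e#} \<and> F \<noteq> {#} \<and> e = \<Inter>(set_mset F) \<and> E' = E - {#e#}) \<or>
     \<comment> \<open>remove an edge that is the connected union of other edges\<close>
     (\<exists>e F. e \<in># E \<and> F \<subseteq># E - {#e#} \<and> F \<noteq> {#} \<and> connected_union F \<and>
            e = \<Union>(set_mset F) \<and> E' = E - {#e#})"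

end

theory Submission
  imports Defs
begin

definition adj :: "'a set set \<Rightarrow> 'a \<Rightarrow> 'a \<Rightarrow> bool" where
  "adj G x y \<longleftrightarrow> {x, y} \<in> G"

abbreviation rch :: "'a set set \<Rightarrow> 'a \<Rightarrow> 'a \<Rightarrow> bool" where
  "rch G \<equiv> (adj G)\<^sup>*\<^sup>*"

definition restr :: "'a set set \<Rightarrow> 'a set \<Rightarrow> 'a set set" where
  "restr T S = {e \<in> T. e \<subseteq> S}"

lemma ind_eq: "(\<lambda>x y. x \<in> S \<and> y \<in> S \<and> {x, y} \<in> T) = adj (restr T S)"
  by (auto simp: adj_def restr_def fun_eq_iff)

lemma ic_iff: "induced_connected T S \<longleftrightarrow> (\<forall>u\<in>S. \<forall>v\<in>S. rch (restr T S) u v)"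
  unfolding induced_connected_def ind_eq ..

lemma adj_sym: "adj G x y \<Longrightarrow> adj G y x"
  by (simp add: adj_def insert_commute)

lemma rch_sym: "rch G x y \<Longrightarrow> rch G y x"
proof (induction rule: rtranclp_induct)
  case base then show ?case by simp
next
  case (step y z) then show ?case
    by (meson adj_sym converse_rtranclp_into_rtranclp)
qed

lemma rch_mono: "G \<subseteq> H \<Longrightarrow> rch G x y \<Longrightarrow> rch H x y"
proof -
  assume "G \<subseteq> H" "rch G x y"
  have "adj G \<le> adj H" using \<open>G \<subseteq> H\<close> by (auto simp: adj_def)
  then have "rch G \<le> rch H" by (rule rtranclp_mono)
  then show ?thesis using \<open>rch G x y\<close> by auto
qed

lemma rch_edge: "{x, y} \<in> G \<Longrightarrow> rch G x y"
  by (simp add: adj_def r_into_rtranclp)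

lemma rch_trans: "rch G x y \<Longrightarrow> rch G y z \<Longrightarrow> rch G x z"
  by (rule rtranclp_trans)

lemma rch_insert:
  assumes "rch (insert {p, q} G) x y"
  shows "rch G x y \<or> (rch G x p \<and> rch G q y) \<or> (rch G x q \<and> rch G p y)"
  using assms
proof (induction rule: rtranclp_induct)
  case base then show ?case by simp
next
  case (step y z)
  have e: "{y, z} \<in> G \<or> (y = p \<and> z = q) \<or> (y = q \<and> z = p)"
    using step.hyps(2) by (auto simp: adj_def doubleton_eq_iff)
  show ?case
  proof (cases "{y, z} \<in> G")
    case True
    then have "rch G y z" by (rule rch_edge)
    then show ?thesis using step.IH by (meson rch_trans)
  next
    case False
    with e have e2: "(y = p \<and> z = q) \<or> (y = q \<and> z = p)" by auto
    from step.IH show ?thesis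
    proof (elim disjE conjE)
      assume "rch G x y" then show ?thesis using e2 by auto
    next
      assume a: "rch G x p" "rch G q y"
      show ?thesis
      proof (cases "y = p")
        case True then have "z = q" using e2 by auto
        then show ?thesis using a True by (meson rch_sym rch_trans)
      next
        case False then have "y = q" "z = p" using e2 by auto
        then show ?thesis using a by auto
      qed
    next
      assume a: "rch G x q" "rch G p y"
      show ?thesis
      proof (cases "y = q")
        case True then have "z = p" using e2 by auto
        then show ?thesis using a True by (meson rch_sym rch_trans)
      next
        case False then have "y = p" "z = q" using e2 by auto
        then show ?thesis using a by auto
      qed
    qed
  qed
qed

lemma path_rch:
  assumes "\<forall>j. l \<le> j \<and> j < k \<longrightarrow> {xs ! j, xs ! Suc j} \<in> G" and "l \<le> k"
  shows "rch G (xs ! l) (xs ! k)"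
  using assms
proof (induction k)
  case 0 then show ?case by simp
next
  case (Suc k)
  show ?case
  proof (cases "l = Suc k")
    case True then show ?thesis by simp
  next
    case False
    then have "l \<le> k" using Suc.prems by simp
    then have "rch G (xs ! l) (xs ! k)" using Suc by auto
    moreover have "{xs ! k, xs ! Suc k} \<in> G" using Suc.prems \<open>l \<le> k\<close> by auto
    ultimately show ?thesis by (meson rch_edge rch_trans)
  qed
qed

lemma rch_path:
  assumes "rch G a b"
  shows "\<exists>xs. distinct xs \<and> xs \<noteq> [] \<and> xs ! 0 = a \<and> xs ! (length xs - 1) = b \<and>
     (\<forall>j. Suc j < length xs \<longrightarrow> {xs ! j, xs ! Suc j} \<in> G)"
  using assms
proof (induction rule: rtranclp_induct)
  case base
  show ?case by (rule exI[of _ "[a]"]) simp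
next
  case (step b c)
  then obtain xs where xs: "distinct xs" "xs \<noteq> []" "xs ! 0 = a" "xs ! (length xs - 1) = b"
    "\<forall>j. Suc j < length xs \<longrightarrow> {xs ! j, xs ! Suc j} \<in> G" by blast
  have bc: "{b, c} \<in> G" using step.hyps(2) by (simp add: adj_def)
  show ?case
  proof (cases "c \<in> set xs")
    case True
    then obtain k where k: "k < length xs" "xs ! k = c" by (meson in_set_conv_nth)
    show ?thesis
      apply (rule exI[of _ "take (Suc k) xs"])
      using xs k by (auto simp: min_def le_Suc_eq less_Suc_eq_le)
  next
    case False
    show ?thesis
    proof (rule exI[of _ "xs @ [c]"], intro conjI allI impI)
      show "distinct (xs @ [c])" using xs False by simp
      show "xs @ [c] \<noteq> []" by simp
      show "(xs @ [c]) ! 0 = a" using xs by (simp add: nth_append)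
      show "(xs @ [c]) ! (length (xs @ [c]) - 1) = c" by simp
      fix j assume j: "Suc j < length (xs @ [c])"
      show "{(xs @ [c]) ! j, (xs @ [c]) ! Suc j} \<in> G"
      proof (cases "Suc j < length xs")
        case True then show ?thesis using xs by (simp add: nth_append)
      next
        case False
        then have "Suc j = length xs" using j by simp
        then have "j = length xs - 1" by simp
        then show ?thesis using xs bc \<open>Suc j = length xs\<close> by (simp add: nth_append)
      qed
    qed
  qed
qed

lemma edge_idx_inj:
  assumes "distinct xs" "Suc i < length xs" "Suc j < length xs"
    "{xs ! i, xs ! Suc i} = {xs ! j, xs ! Suc j}"
  shows "i = j"
proof -
  have "xs ! i \<in> {xs ! j, xs ! Suc j}" using assms(4) by auto
  then have 1: "i = j \<or> i = Suc j" using assms by (auto simp: nth_eq_iff_index_eq)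
  have "xs ! Suc i \<in> {xs ! j, xs ! Suc j}" using assms(4) by auto
  then have 2: "Suc i = j \<or> i = j" using assms by (auto simp: nth_eq_iff_index_eq)
  from 1 2 show ?thesis by auto
qed

definition acyc :: "'a set set \<Rightarrow> bool" where
  "acyc T \<longleftrightarrow> (\<forall>u v. {u, v} \<in> T \<longrightarrow> \<not> rch (T - {{u, v}}) u v)"

lemma graph_restr: "graph_on V T \<Longrightarrow> restr T V = T"
  by (auto simp: graph_on_def restr_def)

lemma graph_edge: "graph_on V T \<Longrightarrow> {u, v} \<in> T \<Longrightarrow> u \<noteq> v \<and> u \<in> V \<and> v \<in> V"
  unfolding graph_on_def by (fastforce simp: doubleton_eq_iff)

lemma tree_acyc:
  assumes "is_tree V T" shows "acyc T"
  unfolding acyc_def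
proof (intro allI impI notI)
  fix u v assume uv: "{u, v} \<in> T" and r: "rch (T - {{u, v}}) u v"
  have g: "graph_on V T" using assms by (simp add: is_tree_def)
  have "u \<noteq> v" using graph_edge[OF g uv] by simp
  obtain xs where xs: "distinct xs" "xs \<noteq> []" "xs ! 0 = u" "xs ! (length xs - 1) = v"
    "\<forall>j. Suc j < length xs \<longrightarrow> {xs ! j, xs ! Suc j} \<in> T - {{u, v}}"
    using rch_path[OF r] by blast
  have "length xs \<noteq> 1" using xs \<open>u \<noteq> v\<close> by auto
  moreover have "length xs \<noteq> 2"
  proof
    assume "length xs = 2"
    then have "{xs ! 0, xs ! Suc 0} \<in> T - {{u, v}}" using xs(5) by auto
    moreover have "xs ! Suc 0 = v" using xs(4) \<open>length xs = 2\<close> by simp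
    ultimately show False using xs(3) by simp
  qed
  moreover have "length xs \<noteq> 0" using xs(2) by simp
  ultimately have n3: "length xs \<ge> 3" by linarith
  have "has_cycle T"
    unfolding has_cycle_def
  proof (rule exI[of _ xs], intro conjI allI impI)
    show "distinct xs" "3 \<le> length xs" using xs n3 by auto
    fix i assume i: "i < length xs"
    show "{xs ! i, xs ! (Suc i mod length xs)} \<in> T"
    proof (cases "Suc i < length xs")
      case True then show ?thesis using xs(5) by simp
    next
      case False
      then have "Suc i = length xs" using i by simp
      then have "i = length xs - 1" "Suc i mod length xs = 0" by auto
      then show ?thesis using xs uv by (simp add: insert_commute)
    qed
  qed
  then show False using assms by (simp add: is_tree_def)
qed

lemma acyc_nocycle:
  assumes "acyc T" shows "\<not> has_cycle T"
proof
  assume "has_cycle T"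
  then obtain vs where vs: "distinct vs" "length vs \<ge> 3"
    "\<forall>i < length vs. {vs ! i, vs ! (Suc i mod length vs)} \<in> T"
    unfolding has_cycle_def by blast
  define n where "n = length vs"
  define e where "e = {vs ! 0, vs ! 1}"
  have "vs \<noteq> []" using vs(2) by auto
  then have eT: "e \<in> T" using vs(3)[rule_format, of 0] vs(2) by (simp add: e_def)
  have "\<forall>j. 1 \<le> j \<and> j < n - 1 \<longrightarrow> {vs ! j, vs ! Suc j} \<in> T - {e}"
  proof (intro allI impI)
    fix j assume j: "1 \<le> j \<and> j < n - 1"
    have "Suc j < length vs" using j unfolding n_def by linarith
    then have "Suc j mod length vs = Suc j" by simp
    then have "{vs ! j, vs ! Suc j} \<in> T" using vs(3)[rule_format, of j] \<open>Suc j < length vs\<close> by simp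
    moreover have "{vs ! j, vs ! Suc j} \<noteq> e"
    proof
      assume "{vs ! j, vs ! Suc j} = e"
      then have "{vs ! j, vs ! Suc j} = {vs ! 0, vs ! Suc 0}" by (simp add: e_def)
      moreover have "Suc 0 < length vs" using vs(2) by simp
      ultimately have "j = 0" using edge_idx_inj[OF vs(1) \<open>Suc j < length vs\<close>] by blast
      then show False using j by simp
    qed
    ultimately show "{vs ! j, vs ! Suc j} \<in> T - {e}" by simp
  qed
  then have r1: "rch (T - {e}) (vs ! 1) (vs ! (n - 1))"
    using path_rch[of 1 "n - 1" vs "T - {e}"] vs(2) n_def by auto
  have "{vs ! (n - 1), vs ! 0} \<in> T"
  proof -
    have "Suc (n - 1) = n" "n - 1 < n" using vs(2) n_def by auto
    then show ?thesis using vs(3)[rule_format, of "n - 1"] n_def by simp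
  qed
  moreover have "{vs ! (n - 1), vs ! 0} \<noteq> e"
  proof
    assume "{vs ! (n - 1), vs ! 0} = e"
    then have "vs ! (n - 1) \<in> {vs ! 0, vs ! 1}" by (auto simp: e_def)
    moreover have "n - 1 < length vs" "0 < length vs" "1 < length vs" using vs(2) n_def by auto
    ultimately have "n - 1 = 0 \<or> n - 1 = 1"
      using nth_eq_iff_index_eq[OF vs(1)] by blast
    then show False using vs(2) n_def by auto
  qed
  ultimately have r2: "rch (T - {e}) (vs ! (n - 1)) (vs ! 0)" by (simp add: rch_edge)
  have "rch (T - {e}) (vs ! 0) (vs ! 1)" using r1 r2 by (meson rch_sym rch_trans)
  then show False using assms eT by (simp add: acyc_def e_def)
qed

lemma is_tree_iff: "is_tree V T \<longleftrightarrow>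
   V \<noteq> {} \<and> graph_on V T \<and> (\<forall>u\<in>V. \<forall>v\<in>V. rch T u v) \<and> acyc T"
proof
  assume a: "is_tree V T"
  then have "graph_on V T" by (simp add: is_tree_def)
  then show "V \<noteq> {} \<and> graph_on V T \<and> (\<forall>u\<in>V. \<forall>v\<in>V. rch T u v) \<and> acyc T"
    using a tree_acyc[OF a] by (simp add: is_tree_def ic_iff graph_restr)
next
  assume "V \<noteq> {} \<and> graph_on V T \<and> (\<forall>u\<in>V. \<forall>v\<in>V. rch T u v) \<and> acyc T"
  then show "is_tree V T" using acyc_nocycle[of T] by (simp add: is_tree_def ic_iff graph_restr)
qed

lemma helly:
  assumes "acyc T" "induced_connected T X" "induced_connected T Y"
  shows "induced_connected T (X \<inter> Y)"
  unfolding ic_iff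
proof (intro ballI)
  fix a b assume ab: "a \<in> X \<inter> Y" "b \<in> X \<inter> Y"
  then have rX: "rch (restr T X) a b" using assms(2) by (auto simp: ic_iff)
  obtain xs where xs: "distinct xs" "xs \<noteq> []" "xs ! 0 = a" "xs ! (length xs - 1) = b"
    "\<forall>j. Suc j < length xs \<longrightarrow> {xs ! j, xs ! Suc j} \<in> restr T X"
    using rch_path[OF rX] by blast
  have bY: "rch (restr T Y) a b" using assms(3) ab by (auto simp: ic_iff)
  have ey: "{xs ! i, xs ! Suc i} \<in> restr T Y" if i: "Suc i < length xs" for i
  proof (rule ccontr)
    define e where "e = {xs ! i, xs ! Suc i}"
    assume "{xs ! i, xs ! Suc i} \<notin> restr T Y"
    then have "restr T Y \<subseteq> T - {e}" unfolding e_def restr_def by blast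
    then have r0: "rch (T - {e}) a b" by (rule rch_mono) (rule bY)
    have "\<forall>j. 0 \<le> j \<and> j < i \<longrightarrow> {xs ! j, xs ! Suc j} \<in> T - {e}"
    proof (intro allI impI)
      fix j assume j: "0 \<le> j \<and> j < i"
      have jl: "Suc j < length xs" "j \<noteq> i" using j i by auto
      have "{xs ! j, xs ! Suc j} \<noteq> e"
      proof
        assume "{xs ! j, xs ! Suc j} = e"
        then have "{xs ! j, xs ! Suc j} = {xs ! i, xs ! Suc i}" by (simp only: e_def)
        from edge_idx_inj[OF xs(1) jl(1) i this] jl(2) show False by simp
      qed
      moreover have "{xs ! j, xs ! Suc j} \<in> T" using xs(5) jl unfolding restr_def by blast
      ultimately show "{xs ! j, xs ! Suc j} \<in> T - {e}" by blast
    qed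
    then have r1: "rch (T - {e}) (xs ! 0) (xs ! i)" using path_rch[of 0 i xs "T - {e}"] by simp
    have "\<forall>j. Suc i \<le> j \<and> j < length xs - 1 \<longrightarrow> {xs ! j, xs ! Suc j} \<in> T - {e}"
    proof (intro allI impI)
      fix j assume j: "Suc i \<le> j \<and> j < length xs - 1"
      have jl: "Suc j < length xs" "j \<noteq> i" using j i by auto
      have "{xs ! j, xs ! Suc j} \<noteq> e"
      proof
        assume "{xs ! j, xs ! Suc j} = e"
        then have "{xs ! j, xs ! Suc j} = {xs ! i, xs ! Suc i}" by (simp only: e_def)
        from edge_idx_inj[OF xs(1) jl(1) i this] jl(2) show False by simp
      qed
      moreover have "{xs ! j, xs ! Suc j} \<in> T" using xs(5) jl unfolding restr_def by blast
      ultimately show "{xs ! j, xs ! Suc j} \<in> T - {e}" by blast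
    qed
    then have r2: "rch (T - {e}) (xs ! Suc i) (xs ! (length xs - 1))"
      using path_rch[of "Suc i" "length xs - 1" xs "T - {e}"] i by simp
    have "rch (T - {e}) (xs ! i) (xs ! 0)" using r1 by (rule rch_sym)
    also have "rch (T - {e}) (xs ! 0) (xs ! (length xs - 1))" using r0 xs(3,4) by simp
    also have "rch (T - {e}) (xs ! (length xs - 1)) (xs ! Suc i)" using r2 by (rule rch_sym)
    finally have "rch (T - {e}) (xs ! i) (xs ! Suc i)" .
    moreover have "e \<in> T" using xs(5) i unfolding e_def restr_def by blast
    ultimately show False using assms(1) by (simp add: acyc_def e_def)
  qed
  have "\<forall>j. 0 \<le> j \<and> j < length xs - 1 \<longrightarrow> {xs ! j, xs ! Suc j} \<in> restr T (X \<inter> Y)"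
  proof (intro allI impI)
    fix j assume "0 \<le> j \<and> j < length xs - 1"
    then have "Suc j < length xs" by auto
    then show "{xs ! j, xs ! Suc j} \<in> restr T (X \<inter> Y)" using ey[of j] xs(5) unfolding restr_def by blast
  qed
  then have "rch (restr T (X \<inter> Y)) (xs ! 0) (xs ! (length xs - 1))"
    using path_rch[of 0 "length xs - 1" xs] by simp
  then show "rch (restr T (X \<inter> Y)) a b" using xs(3,4) by simp
qed

lemma union_conn:
  assumes "induced_connected T X" "induced_connected T Y" "X \<inter> Y \<noteq> {}"
  shows "induced_connected T (X \<union> Y)"
  unfolding ic_iff
proof (intro ballI)
  obtain z where z: "z \<in> X" "z \<in> Y" using assms(3) by auto
  have sx: "restr T X \<subseteq> restr T (X \<union> Y)" "restr T Y \<subseteq> restr T (X \<union> Y)"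
    by (auto simp: restr_def)
  have *: "rch (restr T (X \<union> Y)) a z" if "a \<in> X \<union> Y" for a
    using that assms z sx by (meson Un_iff ic_iff rch_mono)
  fix a b assume "a \<in> X \<union> Y" "b \<in> X \<union> Y"
  then show "rch (restr T (X \<union> Y)) a b" using * by (meson rch_sym rch_trans)
qed

lemma cunion_conn:
  assumes "connected_union F" "\<forall>f\<in>#F. induced_connected T f"
  shows "induced_connected T (\<Union>(set_mset F))"
  unfolding ic_iff
proof (intro ballI)
  define U where "U = \<Union>(set_mset F)"
  fix a b assume a: "a \<in> \<Union>(set_mset F)" and b: "b \<in> \<Union>(set_mset F)"
  then obtain A B where AB: "A \<in># F" "a \<in> A" "B \<in># F" "b \<in> B" by auto
  have sub: "restr T C \<subseteq> restr T U" if "C \<in># F" for C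
    using that by (auto simp: restr_def U_def)
  have "(\<lambda>X Y. X \<in># F \<and> Y \<in># F \<and> X \<inter> Y \<noteq> {})\<^sup>*\<^sup>* A B"
    using assms(1) AB by (simp add: connected_union_def)
  then have "B \<in># F \<and> (\<forall>x\<in>B. rch (restr T U) a x)"
  proof (induction rule: rtranclp_induct)
    case base
    then show ?case using AB assms(2) sub by (meson ic_iff rch_mono)
  next
    case (step C C')
    then obtain z where z: "z \<in> C" "z \<in> C'" by auto
    have "\<forall>x\<in>C'. rch (restr T U) z x"
      using step.hyps(2) z assms(2) sub by (meson ic_iff rch_mono)
    then show ?case using step z by (meson rch_trans)
  qed
  then show "rch (restr T (\<Union>(set_mset F))) a b" using AB by (simp add: U_def)
qed


lemma inter_conn:
  assumes "acyc T" "finite FF" "FF \<noteq> {}" "\<forall>f\<in>FF. induced_connected T f"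
  shows "induced_connected T (\<Inter>FF)"
  using assms(2,3,4)
proof (induction FF rule: finite_ne_induct)
  case (singleton x) then show ?case by simp
next
  case (insert x F) then show ?case using helly[OF assms(1)] by simp
qed

lemma ic_single: "induced_connected T {x}"
  by (simp add: ic_iff)

definition pres :: "'a set \<Rightarrow> 'a set multiset \<Rightarrow> 'a set multiset \<Rightarrow> bool" where
  "pres V E E' \<longleftrightarrow> hypergraph V E' \<and>
     (\<forall>T. is_tree V T \<longrightarrow> ((\<forall>x\<in>#E. induced_connected T x) \<longleftrightarrow> (\<forall>x\<in>#E'. induced_connected T x)))"

lemma add_ok:
  assumes "hypergraph V E" "e \<noteq> {}" "e \<subseteq> V"
    "\<And>T. is_tree V T \<Longrightarrow> \<forall>x\<in>#E. induced_connected T x \<Longrightarrow> induced_connected T e"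
  shows "pres V E (add_mset e E)"
  using assms unfolding pres_def hypergraph_def by auto

lemma rem_ok:
  assumes "hypergraph V E" "e \<in># E"
    "\<And>T. is_tree V T \<Longrightarrow> \<forall>x\<in>#E - {#e#}. induced_connected T x \<Longrightarrow> induced_connected T e"
  shows "pres V E (E - {#e#})"
proof -
  have E: "E = add_mset e (E - {#e#})" using assms(2) by simp
  have h: "hypergraph V (E - {#e#})" using assms(1) unfolding hypergraph_def
    by (meson in_diffD)
  show ?thesis unfolding pres_def
  proof (intro conjI allI impI h)
    fix T assume T: "is_tree V T"
    show "(\<forall>x\<in>#E. induced_connected T x) \<longleftrightarrow> (\<forall>x\<in>#E - {#e#}. induced_connected T x)"
    proof
      assume "\<forall>x\<in>#E. induced_connected T x" then show "\<forall>x\<in>#E - {#e#}. induced_connected T x"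
        by (meson in_diffD)
    next
      assume a: "\<forall>x\<in>#E - {#e#}. induced_connected T x"
      then have "induced_connected T e" using assms(3) T by blast
      then show "\<forall>x\<in>#E. induced_connected T x" using a E
        by (metis insert_iff set_mset_add_mset_insert)
    qed
  qed
qed

lemma cnt2_in: "2 \<le> count E e \<Longrightarrow> e \<in># E"
  by (metis not_in_iff not_numeral_le_zero)

lemma in_count2: "e \<in># E \<Longrightarrow> 2 \<le> count (add_mset e E) e"
proof -
  assume "e \<in># E"
  then have "count E e \<noteq> 0" by (simp add: not_in_iff)
  then show ?thesis by simp
qed

lemma op_pres:
  assumes h: "hypergraph V E" and op: "hyper_op V E E'"
  shows "pres V E E'"
  using op unfolding hyper_op_def
proof (elim disjE exE conjE)
  fix e assume e: "e \<subseteq> V" "card e = 1" "E' = add_mset e E"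
  then obtain x where "e = {x}" by (meson card_1_singletonE)
  then have ic: "\<And>T. induced_connected T e" using ic_single by simp
  have "e \<noteq> {}" using \<open>e = {x}\<close> by simp
  have "pres V E (add_mset e E)" using add_ok[OF h \<open>e \<noteq> {}\<close> e(1)] ic by blast
  then show ?thesis using e(3) by simp
next
  fix e assume e: "e \<in># E" "card e = 1" "E' = E - {#e#}"
  then obtain x where "e = {x}" by (meson card_1_singletonE)
  then have ic: "\<And>T. induced_connected T e" using ic_single by simp
  have "pres V E (E - {#e#})" using rem_ok[OF h e(1)] ic by blast
  then show ?thesis using e(3) by simp
next
  assume "V \<noteq> {}" "E' = add_mset V E"
  moreover have "pres V E (add_mset V E)"
    by (rule add_ok[OF h]) (use \<open>V \<noteq> {}\<close> in \<open>simp_all add: is_tree_def\<close>)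
  ultimately show ?thesis by simp
next
  assume "V \<in># E" "E' = E - {#V#}"
  moreover have "pres V E (E - {#V#})"
    by (rule rem_ok[OF h \<open>V \<in># E\<close>]) (simp add: is_tree_def)
  ultimately show ?thesis by simp
next
  fix e assume e: "e \<in># E" "E' = add_mset e E"
  have "pres V E (add_mset e E)"
    by (rule add_ok[OF h]) (use e h in \<open>simp_all add: hypergraph_def\<close>)
  then show ?thesis using e by simp
next
  fix e assume e: "2 \<le> count E e" "E' = E - {#e#}"
  then have "e \<in># E - {#e#}" by (simp add: in_diff_count)
  have "e \<in># E" using e by (metis cnt2_in)
  then have "pres V E (E - {#e#})"
    by (rule rem_ok[OF h]) (use \<open>e \<in># E - {#e#}\<close> in blast)
  then show ?thesis using e by simp
next
  fix F assume F: "F \<subseteq># E" "F \<noteq> {#}" "\<Inter>(set_mset F) \<noteq> {}"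
    "E' = add_mset (\<Inter>(set_mset F)) E"
  have sF: "set_mset F \<subseteq> set_mset E" using F(1) by (rule set_mset_mono)
  obtain f where f: "f \<in># F" using F(2) by (meson multiset_nonemptyE)
  have "f \<subseteq> V" using f sF h unfolding hypergraph_def by auto
  moreover have "\<Inter>(set_mset F) \<subseteq> f" using f by (simp add: Inter_lower)
  ultimately have "\<Inter>(set_mset F) \<subseteq> V" by (rule order_trans[rotated])
  moreover have "induced_connected T (\<Inter>(set_mset F))"
    if "is_tree V T" "\<forall>x\<in>#E. induced_connected T x" for T
    by (rule inter_conn[OF tree_acyc[OF that(1)]]) (use F(2) sF that(2) in auto)
  ultimately have "pres V E (add_mset (\<Inter>(set_mset F)) E)" by (rule add_ok[OF h F(3)])
  then show ?thesis using F(4) by simp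
next
  fix e1 e2 assume a: "{#e1, e2#} \<subseteq># E" "e1 \<inter> e2 \<noteq> {}" "E' = add_mset (e1 \<union> e2) E"
  have "e1 \<in># E" "e2 \<in># E" using a(1) by (auto dest: mset_subset_eqD)
  moreover have "e1 \<union> e2 \<noteq> {}" using a(2) by auto
  moreover have "e1 \<union> e2 \<subseteq> V" using \<open>e1 \<in># E\<close> \<open>e2 \<in># E\<close> h by (simp add: hypergraph_def)
  moreover have "induced_connected T (e1 \<union> e2)"
    if "is_tree V T" "\<forall>x\<in>#E. induced_connected T x" for T
    using union_conn a(2) that(2) \<open>e1 \<in># E\<close> \<open>e2 \<in># E\<close> by blast
  ultimately have "pres V E (add_mset (e1 \<union> e2) E)" by (intro add_ok[OF h])
  then show ?thesis using a(3) by simp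
next
  fix F assume F: "F \<subseteq># E" "F \<noteq> {#}" "connected_union F" "E' = add_mset (\<Union>(set_mset F)) E"
  have sF: "set_mset F \<subseteq> set_mset E" using F(1) by (rule set_mset_mono)
  obtain f where f: "f \<in># F" using F(2) by (meson multiset_nonemptyE)
  have "f \<noteq> {}" using f sF h unfolding hypergraph_def by auto
  then have "\<Union>(set_mset F) \<noteq> {}" using f by blast
  moreover have "\<Union>(set_mset F) \<subseteq> V" using sF h unfolding hypergraph_def by blast
  moreover have "induced_connected T (\<Union>(set_mset F))"
    if "is_tree V T" "\<forall>x\<in>#E. induced_connected T x" for T
    using cunion_conn[OF F(3)] sF that(2) by auto
  ultimately have "pres V E (add_mset (\<Union>(set_mset F)) E)" by (intro add_ok[OF h])
  then show ?thesis using F(4) by simp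
next
  fix e F assume F: "e \<in># E" "F \<subseteq># E - {#e#}" "F \<noteq> {#}" "e = \<Inter>(set_mset F)" "E' = E - {#e#}"
  have sF: "set_mset F \<subseteq> set_mset (E - {#e#})" using F(2) by (rule set_mset_mono)
  have "induced_connected T e"
    if "is_tree V T" "\<forall>x\<in>#E - {#e#}. induced_connected T x" for T
    unfolding F(4) by (rule inter_conn[OF tree_acyc[OF that(1)]]) (use F(3) sF that(2) in auto)
  then have "pres V E (E - {#e#})" by (intro rem_ok[OF h F(1)])
  then show ?thesis using F(5) by simp
next
  fix e F assume F: "e \<in># E" "F \<subseteq># E - {#e#}" "F \<noteq> {#}" "connected_union F"
    "e = \<Union>(set_mset F)" "E' = E - {#e#}"
  have sF: "set_mset F \<subseteq> set_mset (E - {#e#})" using F(2) by (rule set_mset_mono)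
  have "induced_connected T e"
    if "is_tree V T" "\<forall>x\<in>#E - {#e#}. induced_connected T x" for T
    using cunion_conn[OF F(4)] F(5) sF that(2) by auto
  then have "pres V E (E - {#e#})" by (intro rem_ok[OF h F(1)])
  then show ?thesis using F(6) by simp
qed

lemma cu_two: "e1 \<inter> e2 \<noteq> {} \<Longrightarrow> connected_union {#e1, e2#}"
  unfolding connected_union_def
proof (intro ballI)
  fix A B assume a: "e1 \<inter> e2 \<noteq> {}" "A \<in># {#e1, e2#}" "B \<in># {#e1, e2#}"
  show "(\<lambda>X Y. X \<in># {#e1, e2#} \<and> Y \<in># {#e1, e2#} \<and> X \<inter> Y \<noteq> {})\<^sup>*\<^sup>* A B"
  proof (cases "A = B")
    case True then show ?thesis by simp
  next
    case False
    then have "A \<inter> B \<noteq> {}" using a by (auto simp: Int_commute)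
    then show ?thesis using a by (intro r_into_rtranclp) simp
  qed
qed

lemma op_add1: "e \<subseteq> V \<Longrightarrow> card e = 1 \<Longrightarrow> hyper_op V E (add_mset e E)"
  unfolding hyper_op_def by (rule disjI1, blast)
lemma op_rem1: "e \<in># E \<Longrightarrow> card e = 1 \<Longrightarrow> hyper_op V E (E - {#e#})"
  unfolding hyper_op_def by (rule disjI2, rule disjI1, blast)
lemma op_addV: "V \<noteq> {} \<Longrightarrow> hyper_op V E (add_mset V E)"
  unfolding hyper_op_def by (rule disjI2, rule disjI2, rule disjI1, blast)
lemma op_remV: "V \<in># E \<Longrightarrow> hyper_op V E (E - {#V#})"
  unfolding hyper_op_def by (rule disjI2, rule disjI2, rule disjI2, rule disjI1, blast)
lemma op_copy: "e \<in># E \<Longrightarrow> hyper_op V E (add_mset e E)"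
  unfolding hyper_op_def by (rule disjI2, rule disjI2, rule disjI2, rule disjI2, rule disjI1, blast)
lemma op_uncopy: "2 \<le> count E e \<Longrightarrow> hyper_op V E (E - {#e#})"
  unfolding hyper_op_def by (rule disjI2, rule disjI2, rule disjI2, rule disjI2, rule disjI2, rule disjI1, blast)
lemma op_int: "F \<subseteq># E \<Longrightarrow> F \<noteq> {#} \<Longrightarrow> \<Inter>(set_mset F) \<noteq> {} \<Longrightarrow>
    hyper_op V E (add_mset (\<Inter>(set_mset F)) E)"
  unfolding hyper_op_def by (rule disjI2, rule disjI2, rule disjI2, rule disjI2, rule disjI2, rule disjI2, rule disjI1, blast)
lemma op_un2: "{#e1, e2#} \<subseteq># E \<Longrightarrow> e1 \<inter> e2 \<noteq> {} \<Longrightarrow> hyper_op V E (add_mset (e1 \<union> e2) E)"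
  unfolding hyper_op_def by (rule disjI2, rule disjI2, rule disjI2, rule disjI2, rule disjI2, rule disjI2, rule disjI2, rule disjI1, blast)
lemma op_cun: "F \<subseteq># E \<Longrightarrow> F \<noteq> {#} \<Longrightarrow> connected_union F \<Longrightarrow>
    hyper_op V E (add_mset (\<Union>(set_mset F)) E)"
  unfolding hyper_op_def by (rule disjI2, rule disjI2, rule disjI2, rule disjI2, rule disjI2, rule disjI2, rule disjI2, rule disjI2, rule disjI1, blast)
lemma op_remint: "e \<in># E \<Longrightarrow> F \<subseteq># E - {#e#} \<Longrightarrow> F \<noteq> {#} \<Longrightarrow> e = \<Inter>(set_mset F) \<Longrightarrow>
    hyper_op V E (E - {#e#})"
  unfolding hyper_op_def by (rule disjI2, rule disjI2, rule disjI2, rule disjI2, rule disjI2, rule disjI2, rule disjI2, rule disjI2, rule disjI2, rule disjI1, blast)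
lemma op_remcun: "e \<in># E \<Longrightarrow> F \<subseteq># E - {#e#} \<Longrightarrow> F \<noteq> {#} \<Longrightarrow> connected_union F \<Longrightarrow>
    e = \<Union>(set_mset F) \<Longrightarrow> hyper_op V E (E - {#e#})"
  unfolding hyper_op_def by (rule disjI2, rule disjI2, rule disjI2, rule disjI2, rule disjI2, rule disjI2, rule disjI2, rule disjI2, rule disjI2, rule disjI2, blast)

lemma op_sym:
  assumes h: "hypergraph V E" and op: "hyper_op V E E'"
  shows "hyper_op V E' E"
  using op[unfolded hyper_op_def]
proof (elim disjE exE conjE)
  fix e assume e: "e \<subseteq> V" "card e = 1" "E' = add_mset e E"
  then show ?thesis using op_rem1[of e E' V] by simp
next
  fix e assume e: "e \<in># E" "card e = 1" "E' = E - {#e#}"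
  then have "e \<subseteq> V" using h by (simp add: hypergraph_def)
  then show ?thesis using e op_add1[of e V E'] by simp
next
  assume "V \<noteq> {}" "E' = add_mset V E"
  then show ?thesis using op_remV[of V E'] by simp
next
  assume a: "V \<in># E" "E' = E - {#V#}"
  moreover then have "V \<noteq> {}" using h by (auto simp: hypergraph_def)
  ultimately show ?thesis using op_addV[of V E'] by simp
next
  fix e assume e: "e \<in># E" "E' = add_mset e E"
  then have "2 \<le> count E' e" by (simp add: in_count2)
  then show ?thesis using e op_uncopy[of E' e V] by simp
next
  fix e assume e: "2 \<le> count E e" "E' = E - {#e#}"
  then have "e \<in># E'" by (simp add: in_diff_count)
  moreover have "e \<in># E" using e by (metis cnt2_in)
  ultimately show ?thesis using e op_copy[of e E' V] by simp
next
  fix F assume F: "F \<subseteq># E" "F \<noteq> {#}" "\<Inter>(set_mset F) \<noteq> {}"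
    "E' = add_mset (\<Inter>(set_mset F)) E"
  have "hyper_op V E' (E' - {#\<Inter>(set_mset F)#})"
    by (rule op_remint[of _ _ F]) (use F in simp_all)
  then show ?thesis using F(4) by simp
next
  fix e1 e2 assume a: "{#e1, e2#} \<subseteq># E" "e1 \<inter> e2 \<noteq> {}" "E' = add_mset (e1 \<union> e2) E"
  have "connected_union {#e1, e2#}" using a(2) by (rule cu_two)
  have "hyper_op V E' (E' - {#e1 \<union> e2#})"
    by (rule op_remcun[of _ _ "{#e1, e2#}"]) (use a \<open>connected_union {#e1, e2#}\<close> in simp_all)
  then show ?thesis using a(3) by simp
next
  fix F assume F: "F \<subseteq># E" "F \<noteq> {#}" "connected_union F" "E' = add_mset (\<Union>(set_mset F)) E"
  have "hyper_op V E' (E' - {#\<Union>(set_mset F)#})"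
    by (rule op_remcun[of _ _ F]) (use F in simp_all)
  then show ?thesis using F(4) by simp
next
  fix e F assume F: "e \<in># E" "F \<subseteq># E - {#e#}" "F \<noteq> {#}" "e = \<Inter>(set_mset F)" "E' = E - {#e#}"
  then have "e \<noteq> {}" using h by (auto simp: hypergraph_def)
  then have "hyper_op V E' (add_mset (\<Inter>(set_mset F)) E')" using F op_int[of F E'] by simp
  then show ?thesis using F by simp
next
  fix e F assume F: "e \<in># E" "F \<subseteq># E - {#e#}" "F \<noteq> {#}" "connected_union F"
    "e = \<Union>(set_mset F)" "E' = E - {#e#}"
  then have "hyper_op V E' (add_mset (\<Union>(set_mset F)) E')" using op_cun[of F E'] by simp
  then show ?thesis using F by simp
qed

inductive Dset :: "'a set \<Rightarrow> 'a set multiset \<Rightarrow> 'a set \<Rightarrow> bool" for V E where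
  base: "e \<in># E \<Longrightarrow> Dset V E e"
| sing: "x \<in> V \<Longrightarrow> Dset V E {x}"
| full: "V \<noteq> {} \<Longrightarrow> Dset V E V"
| int: "Dset V E A \<Longrightarrow> Dset V E B \<Longrightarrow> A \<inter> B \<noteq> {} \<Longrightarrow> Dset V E (A \<inter> B)"
| un: "Dset V E A \<Longrightarrow> Dset V E B \<Longrightarrow> A \<inter> B \<noteq> {} \<Longrightarrow> Dset V E (A \<union> B)"

lemma Dset_sub:
  assumes "hypergraph V E" shows "Dset V E X \<Longrightarrow> X \<noteq> {} \<and> X \<subseteq> V"
  by (induction rule: Dset.induct) (use assms in \<open>auto simp: hypergraph_def\<close>)

lemma Dset_conn:
  assumes "host_tree V E T" shows "Dset V E X \<Longrightarrow> induced_connected T X"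
proof (induction rule: Dset.induct)
  case (base e) then show ?case using assms by (simp add: host_tree_def)
next
  case (sing x) show ?case by (rule ic_single)
next
  case full then show ?case using assms by (simp add: host_tree_def is_tree_def)
next
  case (int A B)
  have "acyc T" using assms tree_acyc by (auto simp: host_tree_def)
  then show ?case using helly int by blast
next
  case (un A B) then show ?case using union_conn by blast
qed

lemma two_sub: "A \<noteq> B \<Longrightarrow> A \<in># M \<Longrightarrow> B \<in># M \<Longrightarrow> {#A, B#} \<subseteq># M"
proof -
  assume a: "A \<noteq> B" "A \<in># M" "B \<in># M"
  then have "B \<in># M - {#A#}" by (simp add: in_diff_count)
  then have "{#B#} \<subseteq># M - {#A#}" by simp
  then have "add_mset A {#B#} \<subseteq># add_mset A (M - {#A#})" by simp
  then show ?thesis using a(2) by simp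
qed

lemma gen:
  assumes "Dset V E S"
  shows "E \<subseteq># M \<Longrightarrow> \<exists>M'. (hyper_op V)\<^sup>*\<^sup>* M M' \<and> M \<subseteq># M' \<and> S \<in># M'"
  using assms
proof (induction arbitrary: M rule: Dset.induct)
  case (base e) then show ?case by (auto dest: mset_subset_eqD)
next
  case (sing x)
  have "hyper_op V M (add_mset {x} M)" using sing by (intro op_add1) auto
  then show ?case by (intro exI[of _ "add_mset {x} M"]) auto
next
  case full
  have "hyper_op V M (add_mset V M)" using full(1) by (rule op_addV)
  then show ?case by (intro exI[of _ "add_mset V M"]) auto
next
  case (int A B)
  obtain M1 where M1: "(hyper_op V)\<^sup>*\<^sup>* M M1" "M \<subseteq># M1" "A \<in># M1" using int by blast
  obtain M2 where M2: "(hyper_op V)\<^sup>*\<^sup>* M1 M2" "M1 \<subseteq># M2" "B \<in># M2"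
    using int M1 subset_mset.order_trans by blast
  have A2: "A \<in># M2" using M1 M2 by (auto dest: mset_subset_eqD)
  show ?case
  proof (cases "A = B")
    case True then show ?thesis using M1 M2 A2 by (intro exI[of _ M2]) auto
  next
    case False
    have "hyper_op V M2 (add_mset (\<Inter>(set_mset {#A, B#})) M2)"
      using two_sub[OF False A2 M2(3)] \<open>A \<inter> B \<noteq> {}\<close> by (intro op_int) auto
    then have "hyper_op V M2 (add_mset (A \<inter> B) M2)" by simp
    then show ?thesis using M1 M2
      by (intro exI[of _ "add_mset (A \<inter> B) M2"])
        (auto intro: rtranclp_trans subset_mset.order_trans)
  qed
next
  case (un A B)
  obtain M1 where M1: "(hyper_op V)\<^sup>*\<^sup>* M M1" "M \<subseteq># M1" "A \<in># M1" using un by blast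
  obtain M2 where M2: "(hyper_op V)\<^sup>*\<^sup>* M1 M2" "M1 \<subseteq># M2" "B \<in># M2"
    using un M1 subset_mset.order_trans by blast
  have A2: "A \<in># M2" using M1 M2 by (auto dest: mset_subset_eqD)
  show ?case
  proof (cases "A = B")
    case True then show ?thesis using M1 M2 A2 by (intro exI[of _ M2]) auto
  next
    case False
    have "hyper_op V M2 (add_mset (A \<union> B) M2)"
      using two_sub[OF False A2 M2(3)] \<open>A \<inter> B \<noteq> {}\<close> by (rule op_un2)
    then show ?thesis using M1 M2
      by (intro exI[of _ "add_mset (A \<union> B) M2"])
        (auto intro: rtranclp_trans subset_mset.order_trans)
  qed
qed

lemma chain_pres:
  assumes "(hyper_op V)\<^sup>*\<^sup>* E E'" "hypergraph V E"
  shows "hypergraph V E' \<and> (\<forall>T. host_tree V E T \<longleftrightarrow> host_tree V E' T)"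
  using assms
proof (induction rule: rtranclp_induct)
  case base then show ?case by simp
next
  case (step y z)
  then have "pres V y z" using op_pres by blast
  then show ?case using step unfolding pres_def host_tree_def by blast
qed

lemma chain_sym:
  assumes "(hyper_op V)\<^sup>*\<^sup>* E E'" "hypergraph V E"
  shows "(hyper_op V)\<^sup>*\<^sup>* E' E"
  using assms
proof (induction rule: rtranclp_induct)
  case base then show ?case by simp
next
  case (step y z)
  have "hypergraph V y" using chain_pres step by blast
  then have "hyper_op V z y" using op_sym step by blast
  then show ?case using step by (meson converse_rtranclp_into_rtranclp)
qed

lemma dedup: "(hyper_op V)\<^sup>*\<^sup>* M (mset_set (set_mset M))"
proof (induction "size M" arbitrary: M rule: less_induct)
  case less
  show ?case
  proof (cases "\<exists>e. 2 \<le> count M e")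
    case True
    then obtain e where e: "2 \<le> count M e" by blast
    then have eM: "e \<in># M" by (metis cnt2_in)
    have e2: "e \<in># M - {#e#}" using e by (simp add: in_diff_count)
    have op: "hyper_op V M (M - {#e#})" using e by (rule op_uncopy)
    have sz: "size (M - {#e#}) < size M" using eM by (simp add: size_Diff1_less)
    have "set_mset M = insert e (set_mset (M - {#e#}))"
      by (metis eM insert_DiffM set_mset_add_mset_insert)
    then have st: "set_mset (M - {#e#}) = set_mset M" using e2 by auto
    show ?thesis using less[OF sz] op st by (metis converse_rtranclp_into_rtranclp)
  next
    case False
    have "M = mset_set (set_mset M)"
    proof (rule multiset_eqI)
      fix x
      show "count M x = count (mset_set (set_mset M)) x"
      proof (cases "x \<in># M")
        case True
        have "count M x \<noteq> 0" using True by (simp add: not_in_iff)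
        moreover have "count M x < 2" using False by (simp add: not_le)
        ultimately have "count M x = 1" by linarith
        then show ?thesis using True by simp
      next
        case False
        then show ?thesis by (simp add: not_in_iff)
      qed
    qed
    then show ?thesis by (metis rtranclp.rtrancl_refl)
  qed
qed

lemma add_all:
  assumes "finite A" "\<forall>S\<in>A. Dset V E S"
  shows "\<exists>M'. (hyper_op V)\<^sup>*\<^sup>* E M' \<and> E \<subseteq># M' \<and> A \<subseteq> set_mset M'"
  using assms
proof (induction A rule: finite_induct)
  case empty then show ?case by auto
next
  case (insert S A)
  then obtain M' where M': "(hyper_op V)\<^sup>*\<^sup>* E M'" "E \<subseteq># M'" "A \<subseteq> set_mset M'" by auto
  obtain M'' where M'': "(hyper_op V)\<^sup>*\<^sup>* M' M''" "M' \<subseteq># M''" "S \<in># M''"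
    using gen[of V E S M'] insert M' by auto
  have "set_mset M' \<subseteq> set_mset M''" using M''(2) by (rule set_mset_mono)
  then show ?case using M' M''
    by (intro exI[of _ M'']) (auto intro: rtranclp_trans subset_mset.order_trans)
qed


lemma split_edge:
  assumes "induced_connected T X" "{u, v} \<in> T" "u \<in> X" "v \<in> X" "y \<in> X"
  shows "rch (restr (T - {{u, v}}) X) y u \<or> rch (restr (T - {{u, v}}) X) y v"
proof -
  have "rch (restr T X) y u" using assms by (simp add: ic_iff)
  then show ?thesis
  proof (induction rule: converse_rtranclp_induct)
    case base then show ?case by simp
  next
    case (step y z)
    have yz: "{y, z} \<in> T" "y \<in> X" "z \<in> X" using step.hyps(1) by (auto simp: adj_def restr_def)
    show ?case
    proof (cases "{y, z} = {u, v}")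
      case True
      then have "y = u \<or> y = v" by (auto simp: doubleton_eq_iff)
      then show ?thesis by auto
    next
      case False
      then have "{y, z} \<in> restr (T - {{u, v}}) X" using yz by (auto simp: restr_def)
      then have "adj (restr (T - {{u, v}}) X) y z" by (simp add: adj_def)
      then show ?thesis using step.IH by (meson converse_rtranclp_into_rtranclp)
    qed
  qed
qed

lemma restr_sub: "restr T X \<subseteq> T"
  by (auto simp: restr_def)

lemma restr_mono: "T \<subseteq> T' \<Longrightarrow> X \<subseteq> X' \<Longrightarrow> restr T X \<subseteq> restr T' X'"
  by (auto simp: restr_def)

lemma exch_acyc:
  assumes ac: "acyc T" and uv: "{u, v} \<in> T"
    and A2: "rch (T - {{u, v}}) w u"
  shows "acyc (insert {w, v} (T - {{u, v}}))"
  unfolding acyc_def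
proof (intro allI impI notI)
  define G0 where "G0 = T - {{u, v}}"
  have A1: "\<not> rch G0 u v" using ac uv by (simp add: acyc_def G0_def)
  have A2': "rch G0 w u" using A2 by (simp add: G0_def)
  fix a b assume ab: "{a, b} \<in> insert {w, v} (T - {{u, v}})"
    and r: "rch (insert {w, v} (T - {{u, v}}) - {{a, b}}) a b"
  show False
  proof (cases "{a, b} = {w, v}")
    case True
    have "insert {w, v} (T - {{u, v}}) - {{a, b}} \<subseteq> G0" unfolding True G0_def by blast
    then have "rch G0 a b" using r by (rule rch_mono)
    moreover have "(a = w \<and> b = v) \<or> (a = v \<and> b = w)" using True[unfolded doubleton_eq_iff] .
    ultimately have "rch G0 w v" by (metis rch_sym)
    then have "rch G0 u v" using A2' by (meson rch_sym rch_trans)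
    then show False using A1 by simp
  next
    case False
    define G1 where "G1 = G0 - {{a, b}}"
    define H where "H = T - {{a, b}}"
    have abG0: "{a, b} \<in> G0" using ab False by (simp add: G0_def)
    then have abT: "{a, b} \<in> T" and abuv: "{a, b} \<noteq> {u, v}" by (auto simp: G0_def)
    have acH: "\<not> rch H a b" using ac abT by (simp add: acyc_def H_def)
    have eq1: "insert {w, v} (T - {{u, v}}) - {{a, b}} = insert {w, v} G1"
      using False by (auto simp: G1_def G0_def)
    have eq0: "G0 = insert {a, b} G1" using abG0 by (auto simp: G1_def)
    have s1: "G1 \<subseteq> H" by (auto simp: G1_def G0_def H_def)
    have s0: "G1 \<subseteq> G0" by (auto simp: G1_def)
    have m1: "rch H x y" if "rch G1 x y" for x y using rch_mono[OF s1 that] .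
    have m0: "rch G0 x y" if "rch G1 x y" for x y using rch_mono[OF s0 that] .
    have uvH: "{u, v} \<in> H" using uv abuv by (auto simp: H_def)
    then have huv: "rch H u v" "rch H v u" by (auto intro: rch_edge simp: insert_commute)
    have r1: "rch (insert {w, v} G1) a b" using r eq1 by simp
    have r2: "rch (insert {a, b} G1) w u" using A2' eq0 by simp
    note c1 = rch_insert[OF r1] and c2 = rch_insert[OF r2]
    have "rch H a b \<or> rch G0 u v"
    proof -
      { assume "rch G1 a b" then have "rch H a b" by (rule m1) }
      moreover
      { assume x: "rch G1 a w" "rch G1 v b" and y: "rch G1 w u"
        have "rch H a w" "rch H w u" "rch H v b" using x y m1 by auto
        then have "rch H a b" using huv by (meson rch_trans) }
      moreover
      { assume x: "rch G1 a w" "rch G1 v b" and y: "rch G1 w a" "rch G1 b u"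
        have "rch G0 v b" "rch G0 b u" using x y m0 by auto
        then have "rch G0 u v" by (meson rch_trans rch_sym) }
      moreover
      { assume x: "rch G1 a w" "rch G1 v b" and y: "rch G1 w b" "rch G1 a u"
        have "rch H a u" "rch H v b" using x y m1 by auto
        then have "rch H a b" using huv by (meson rch_trans) }
      moreover
      { assume x: "rch G1 a v" "rch G1 w b" and y: "rch G1 w u"
        have "rch H a v" "rch H w u" "rch H w b" using x y m1 by auto
        then have "rch H a b" using huv by (meson rch_trans rch_sym) }
      moreover
      { assume x: "rch G1 a v" "rch G1 w b" and y: "rch G1 w a" "rch G1 b u"
        have "rch G0 a v" "rch G0 w a" "rch G0 w b" "rch G0 b u" using x y m0 by auto
        then have "rch G0 v u" by (meson rch_trans rch_sym)
        then have "rch G0 u v" by (rule rch_sym) }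
      moreover
      { assume x: "rch G1 a v" "rch G1 w b" and y: "rch G1 w b" "rch G1 a u"
        have "rch G0 a v" "rch G0 a u" using x y m0 by auto
        then have "rch G0 u v" by (meson rch_trans rch_sym) }
      ultimately show ?thesis using c1 c2 by blast
    qed
    then show False using acH A1 by blast
  qed
qed

lemma exch_core:
  assumes hT: "host_tree V E T"
    and uv: "{u, v} \<in> T" and w: "w \<in> V" "w \<noteq> v"
    and key: "\<And>X. Dset V E X \<Longrightarrow> u \<in> X \<Longrightarrow> v \<in> X \<Longrightarrow>
                 w \<in> X \<and> rch (restr (T - {{u, v}}) X) w u"
  shows "host_tree V E (insert {w, v} (T - {{u, v}}))"
proof -
  define G0 where "G0 = T - {{u, v}}"
  define T' where "T' = insert {w, v} G0"
  have tr: "is_tree V T" using hT by (simp add: host_tree_def)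
  then have Vne: "V \<noteq> {}" and g: "graph_on V T" and cn: "\<forall>a\<in>V. \<forall>b\<in>V. rch T a b"
    and ac: "acyc T" by (auto simp: is_tree_iff)
  have uvV: "u \<noteq> v" "u \<in> V" "v \<in> V" using graph_edge[OF g uv] by auto
  have icV: "induced_connected T V" using tr by (simp add: is_tree_def)
  have "Dset V E V" using Vne by (rule Dset.full)
  then have "rch (restr G0 V) w u" using key uvV by (simp add: G0_def)
  then have A2: "rch G0 w u" using restr_sub rch_mono by metis
  have sT': "G0 \<subseteq> T'" by (auto simp: T'_def)
  have wvT': "{w, v} \<in> T'" by (simp add: T'_def)
  have gT': "graph_on V T'"
    using g w uvV unfolding graph_on_def T'_def G0_def by blast
  have toU: "rch T' x u" if "x \<in> V" for x
  proof -
    have "rch (restr G0 V) x u \<or> rch (restr G0 V) x v"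
      using split_edge[OF icV uv uvV(2,3) that] by (simp add: G0_def)
    then have "rch T' x u \<or> rch T' x v"
      using rch_mono[OF order_trans[OF restr_sub sT']] by blast
    moreover have "rch T' v u"
    proof -
      have "rch T' v w" using wvT' by (simp add: rch_edge insert_commute)
      moreover have "rch T' w u" using rch_mono[OF sT' A2] .
      ultimately show ?thesis by (rule rch_trans)
    qed
    ultimately show ?thesis by (meson rch_trans)
  qed
  have cT': "\<forall>a\<in>V. \<forall>b\<in>V. rch T' a b"
    using toU by (meson rch_sym rch_trans)
  have acT': "acyc T'" unfolding T'_def G0_def by (rule exch_acyc[OF ac uv]) (use A2 G0_def in simp)
  have treeT': "is_tree V T'" using Vne gT' cT' acT' by (simp add: is_tree_iff)
  have icX: "induced_connected T' X" if X: "Dset V E X" for X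
  proof -
    have icTX: "induced_connected T X" using Dset_conn[OF hT X] .
    show ?thesis
    proof (cases "u \<in> X \<and> v \<in> X")
      case True
      then have wX: "w \<in> X" and wu: "rch (restr G0 X) w u" using key[OF X] by (auto simp: G0_def)
      have sub: "restr G0 X \<subseteq> restr T' X" using sT' by (rule restr_mono) simp
      have wvX: "{w, v} \<in> restr T' X" using wX True wvT' by (simp add: restr_def)
      have vu: "rch (restr T' X) v u"
      proof -
        have "rch (restr T' X) v w" using wvX by (simp add: rch_edge insert_commute)
        moreover have "rch (restr T' X) w u" using rch_mono[OF sub wu] .
        ultimately show ?thesis by (rule rch_trans)
      qed
      have xu: "rch (restr T' X) x u" if "x \<in> X" for x
      proof -
        have "rch (restr G0 X) x u \<or> rch (restr G0 X) x v"
          using split_edge[OF icTX uv _ _ that] True by (simp add: G0_def)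
        then have "rch (restr T' X) x u \<or> rch (restr T' X) x v" using rch_mono[OF sub] by blast
        then show ?thesis using vu by (meson rch_trans)
      qed
      show ?thesis unfolding ic_iff using xu by (meson rch_sym rch_trans)
    next
      case False
      have sub: "restr T X \<subseteq> restr T' X"
      proof
        fix e assume e: "e \<in> restr T X"
        then have eT: "e \<in> T" and eX: "e \<subseteq> X" by (auto simp: restr_def)
        have "e \<noteq> {u, v}" using eX False by blast
        then have "e \<in> T'" using eT sT' by (auto simp: G0_def)
        then show "e \<in> restr T' X" using eX by (simp add: restr_def)
      qed
      show ?thesis unfolding ic_iff
      proof (intro ballI)
        fix a b assume "a \<in> X" "b \<in> X"
        then have "rch (restr T X) a b" using icTX by (simp add: ic_iff)
        then show "rch (restr T' X) a b" by (rule rch_mono[OF sub])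
      qed
    qed
  qed
  have "\<forall>e\<in>#E. induced_connected T' e"
  proof
    fix e assume "e \<in># E"
    then have "Dset V E e" by (rule Dset.base)
    then show "induced_connected T' e" by (rule icX)
  qed
  then show ?thesis using treeT' by (simp add: host_tree_def T'_def G0_def)
qed


lemma find_edge:
  assumes hg: "hypergraph V E" and hT: "host_tree V E T"
    and icS: "induced_connected T S" and Sne: "S \<noteq> {}" and SV: "S \<subseteq> V"
    and nD: "\<not> Dset V E S"
  shows "\<exists>u v. {u, v} \<in> T \<and> u \<in> S \<and> v \<in> S \<and> \<not> (\<exists>Y. Dset V E Y \<and> u \<in> Y \<and> v \<in> Y \<and> Y \<subseteq> S)"
proof (rule ccontr)
  assume "\<not> ?thesis"
  then have cov: "\<And>u v. {u, v} \<in> T \<Longrightarrow> u \<in> S \<Longrightarrow> v \<in> S \<Longrightarrow>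
      \<exists>Y. Dset V E Y \<and> u \<in> Y \<and> v \<in> Y \<and> Y \<subseteq> S" by blast
  obtain x0 where x0: "x0 \<in> S" using Sne by blast
  have x0V: "x0 \<in> V" using x0 SV by blast
  have pt: "\<exists>Y. Dset V E Y \<and> x0 \<in> Y \<and> y \<in> Y \<and> Y \<subseteq> S" if y: "y \<in> S" for y
  proof -
    have "rch (restr T S) x0 y" using icS x0 y by (simp add: ic_iff)
    then show ?thesis
    proof (induction rule: rtranclp_induct)
      case base
      have "Dset V E {x0}" using x0V by (rule Dset.sing)
      then show ?case using x0 by blast
    next
      case (step y z)
      then obtain Y where Y: "Dset V E Y" "x0 \<in> Y" "y \<in> Y" "Y \<subseteq> S" by blast
      have yz: "{y, z} \<in> T" "y \<in> S" "z \<in> S" using step.hyps(2) by (auto simp: adj_def restr_def)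
      obtain Y' where Y': "Dset V E Y'" "y \<in> Y'" "z \<in> Y'" "Y' \<subseteq> S" using cov[OF yz] by blast
      have "Y \<inter> Y' \<noteq> {}" using Y(3) Y'(2) by blast
      then have "Dset V E (Y \<union> Y')" using Y(1) Y'(1) by (intro Dset.un)
      then show ?case using Y Y' by blast
    qed
  qed
  have fin: "finite S" using SV hg finite_subset by (auto simp: hypergraph_def)
  have "\<And>A. finite A \<Longrightarrow> A \<subseteq> S \<Longrightarrow> \<exists>Y. Dset V E Y \<and> x0 \<in> Y \<and> A \<subseteq> Y \<and> Y \<subseteq> S"
  proof -
    fix A :: "'a set" assume "finite A" "A \<subseteq> S"
    then show "\<exists>Y. Dset V E Y \<and> x0 \<in> Y \<and> A \<subseteq> Y \<and> Y \<subseteq> S"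
    proof (induction A rule: finite_induct)
      case empty
      have "Dset V E {x0}" using x0V by (rule Dset.sing)
      then show ?case using x0 by blast
    next
      case (insert a A)
      then obtain Y where Y: "Dset V E Y" "x0 \<in> Y" "A \<subseteq> Y" "Y \<subseteq> S" by blast
      obtain Y' where Y': "Dset V E Y'" "x0 \<in> Y'" "a \<in> Y'" "Y' \<subseteq> S" using pt insert by blast
      have "Y \<inter> Y' \<noteq> {}" using Y(2) Y'(2) by blast
      then have "Dset V E (Y \<union> Y')" using Y(1) Y'(1) by (intro Dset.un)
      then show ?case using Y Y' by blast
    qed
  qed
  then obtain Y where "Dset V E Y" "S \<subseteq> Y" "Y \<subseteq> S" using fin by blast
  then have "Dset V E S" by (metis subset_antisym)
  then show False using nD by simp
qed

lemma Dset_Inter: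
  assumes "finite FF" "FF \<noteq> {}" "\<forall>Y\<in>FF. Dset V E Y" "\<Inter>FF \<noteq> {}"
  shows "Dset V E (\<Inter>FF)"
  using assms
proof (induction FF rule: finite_ne_induct)
  case (singleton x) then show ?case by simp
next
  case (insert x F)
  have "\<Inter>F \<noteq> {}" using insert.prems by auto
  then have "Dset V E (\<Inter>F)" using insert by simp
  moreover have "x \<inter> \<Inter>F \<noteq> {}" using insert.prems by simp
  ultimately show ?case using insert.prems by (simp add: Dset.int)
qed

lemma exch_sided:
  assumes hT: "host_tree V E T"
    and uv: "{u, v} \<in> T" and w: "w \<in> V" "w \<notin> S" and uS: "u \<in> S" and vS: "v \<in> S"
    and key: "\<And>X. Dset V E X \<Longrightarrow> u \<in> X \<Longrightarrow> v \<in> X \<Longrightarrow>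
                 w \<in> X \<and> rch (restr (T - {{u, v}}) X) w u"
    and fin: "finite T"
  shows "\<exists>T'. host_tree V E T' \<and> card (restr T' S) < card (restr T S)"
proof -
  define T' where "T' = insert {w, v} (T - {{u, v}})"
  have "w \<noteq> v" using w vS by blast
  then have hT': "host_tree V E T'" unfolding T'_def using exch_core[OF hT uv w(1) _ key] by blast
  have "restr T' S \<subseteq> restr T S - {{u, v}}"
  proof
    fix e assume e: "e \<in> restr T' S"
    then have eS: "e \<subseteq> S" and eT': "e \<in> T'" by (auto simp: restr_def)
    have "e \<noteq> {w, v}" using eS w(2) by blast
    then have "e \<in> T - {{u, v}}" using eT' by (simp add: T'_def)
    then show "e \<in> restr T S - {{u, v}}" using eS by (simp add: restr_def)
  qed
  moreover have "{u, v} \<in> restr T S" using uv uS vS by (simp add: restr_def)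
  ultimately have "restr T' S \<subset> restr T S" by blast
  moreover have "finite (restr T S)" using fin by (simp add: restr_def)
  ultimately have "card (restr T' S) < card (restr T S)" by (rule psubset_card_mono[rotated])
  then show ?thesis using hT' by blast
qed

lemma exchange:
  assumes hg: "hypergraph V E" and hT: "host_tree V E T"
    and icS: "induced_connected T S" and Sne: "S \<noteq> {}" and SV: "S \<subseteq> V"
    and nD: "\<not> Dset V E S"
  shows "\<exists>T'. host_tree V E T' \<and> card (restr T' S) < card (restr T S)"
proof -
  obtain u v where uv: "{u, v} \<in> T" "u \<in> S" "v \<in> S"
    and nY: "\<not> (\<exists>Y. Dset V E Y \<and> u \<in> Y \<and> v \<in> Y \<and> Y \<subseteq> S)"
    using find_edge[OF hg hT icS Sne SV nD] by blast
  have tr: "is_tree V T" using hT by (simp add: host_tree_def)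
  then have Vne: "V \<noteq> {}" and g: "graph_on V T" by (auto simp: is_tree_def)
  have finV: "finite V" using hg by (simp add: hypergraph_def)
  have finT: "finite T"
  proof -
    have "T \<subseteq> Pow V" using g unfolding graph_on_def by auto
    moreover have "finite (Pow V)" using finV by simp
    ultimately show ?thesis by (rule finite_subset)
  qed
  have uvV: "u \<in> V" "v \<in> V" using uv SV by auto
  define FF where "FF = {Y. Dset V E Y \<and> u \<in> Y \<and> v \<in> Y}"
  define B where "B = \<Inter>FF"
  have FFsub: "FF \<subseteq> Pow V"
  proof
    fix Y assume "Y \<in> FF"
    then have "Dset V E Y" by (simp add: FF_def)
    then show "Y \<in> Pow V" using Dset_sub[OF hg] by simp
  qed
  moreover have "finite (Pow V)" using finV by simp
  ultimately have finFF: "finite FF" by (rule finite_subset)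
  have "Dset V E V" using Vne by (rule Dset.full)
  then have VFF: "V \<in> FF" using uvV by (simp add: FF_def)
  have uvB: "u \<in> B" "v \<in> B" by (auto simp: B_def FF_def)
  have DB: "Dset V E B" unfolding B_def
    by (rule Dset_Inter) (use finFF VFF uvB in \<open>auto simp: FF_def B_def\<close>)
  have "\<not> B \<subseteq> S" using nY DB uvB by blast
  then obtain w where wB: "w \<in> B" and wS: "w \<notin> S" by blast
  have BV: "B \<subseteq> V" using VFF by (auto simp: B_def)
  have wV: "w \<in> V" using wB BV by blast
  have Bsub: "B \<subseteq> X" if "Dset V E X" "u \<in> X" "v \<in> X" for X
    using that by (auto simp: B_def FF_def)
  have icB: "induced_connected T B" using Dset_conn[OF hT DB] .
  have "rch (restr (T - {{u, v}}) B) w u \<or> rch (restr (T - {{u, v}}) B) w v"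
    by (rule split_edge[OF icB uv(1) uvB wB])
  then show ?thesis
  proof
    assume wu: "rch (restr (T - {{u, v}}) B) w u"
    have key: "w \<in> X \<and> rch (restr (T - {{u, v}}) X) w u"
      if "Dset V E X" "u \<in> X" "v \<in> X" for X
    proof -
      have sub: "B \<subseteq> X" using Bsub that .
      have "restr (T - {{u, v}}) B \<subseteq> restr (T - {{u, v}}) X" using sub by (auto simp: restr_def)
      then have "rch (restr (T - {{u, v}}) X) w u" using wu by (rule rch_mono)
      moreover have "w \<in> X" using wB sub by blast
      ultimately show ?thesis by simp
    qed
    show ?thesis by (rule exch_sided[OF hT uv(1) wV wS uv(2) uv(3) key finT])
  next
    assume wv: "rch (restr (T - {{u, v}}) B) w v"
    have e: "{v, u} = {u, v}" by (simp add: insert_commute)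
    have key: "w \<in> X \<and> rch (restr (T - {{v, u}}) X) w v"
      if "Dset V E X" "v \<in> X" "u \<in> X" for X
    proof -
      have sub: "B \<subseteq> X" using Bsub that by blast
      have "restr (T - {{u, v}}) B \<subseteq> restr (T - {{u, v}}) X" using sub by (auto simp: restr_def)
      then have "rch (restr (T - {{u, v}}) X) w v" using wv by (rule rch_mono)
      moreover have "w \<in> X" using wB sub by blast
      ultimately show ?thesis using e by simp
    qed
    have uv': "{v, u} \<in> T" using uv(1) e by simp
    show ?thesis by (rule exch_sided[OF hT uv' wV wS uv(3) uv(2) key finT])
  qed
qed

lemma completeness:
  assumes ht: "hypertree V E" and Sne: "S \<noteq> {}" and SV: "S \<subseteq> V"
    and all: "\<And>T. host_tree V E T \<Longrightarrow> induced_connected T S"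
  shows "Dset V E S"
proof (rule ccontr)
  assume nD: "\<not> Dset V E S"
  have hg: "hypergraph V E" using ht by (simp add: hypertree_def)
  have "\<And>T. card (restr T S) = n \<Longrightarrow> host_tree V E T \<Longrightarrow> False" for n
  proof (induction n rule: less_induct)
    case (less n)
    obtain T' where T': "host_tree V E T'" "card (restr T' S) < card (restr T S)"
      using exchange[OF hg less.prems(2) all[OF less.prems(2)] Sne SV nD] by blast
    show False using less.IH[OF _ refl T'(1)] T'(2) less.prems(1) by simp
  qed
  moreover obtain T where "host_tree V E T" using ht by (auto simp: hypertree_def)
  ultimately show False by blast
qed

definition canon :: "'a set \<Rightarrow> 'a set multiset \<Rightarrow> 'a set set" where
  "canon V E = {S. S \<noteq> {} \<and> S \<subseteq> V \<and> (\<forall>T. host_tree V E T \<longrightarrow> induced_connected T S)}"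

lemma to_canon:
  assumes ht: "hypertree V E"
  shows "(hyper_op V)\<^sup>*\<^sup>* E (mset_set (canon V E))"
proof -
  have hg: "hypergraph V E" using ht by (simp add: hypertree_def)
  have finC: "finite (canon V E)"
  proof -
    have "canon V E \<subseteq> Pow V" by (auto simp: canon_def)
    moreover have "finite V" using hg by (simp add: hypergraph_def)
    ultimately show ?thesis by (meson finite_Pow_iff finite_subset)
  qed
  have allD: "\<forall>S\<in>canon V E. Dset V E S"
  proof
    fix S assume "S \<in> canon V E"
    then show "Dset V E S" unfolding canon_def by (intro completeness[OF ht]) simp_all
  qed
  obtain M where M: "(hyper_op V)\<^sup>*\<^sup>* E M" "E \<subseteq># M" "canon V E \<subseteq> set_mset M"
    using add_all[OF finC allD] by blast
  have pr: "hypergraph V M \<and> (\<forall>T. host_tree V E T \<longleftrightarrow> host_tree V M T)"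
    using chain_pres[OF M(1) hg] .
  have "set_mset M \<subseteq> canon V E"
  proof
    fix f assume f: "f \<in># M"
    have "f \<noteq> {} \<and> f \<subseteq> V" using pr f by (simp add: hypergraph_def)
    moreover have "induced_connected T f" if "host_tree V E T" for T
      using pr that f by (simp add: host_tree_def)
    ultimately show "f \<in> canon V E" by (simp add: canon_def)
  qed
  then have "set_mset M = canon V E" using M(3) by blast
  then have "(hyper_op V)\<^sup>*\<^sup>* M (mset_set (canon V E))" using dedup[of V M] by simp
  then show ?thesis using M(1) by (rule rtranclp_trans[rotated])
qed

theorem mainTheorem7:
  fixes V :: "'a set" and E E' :: "'a set multiset"
  assumes "hypertree V E" and "hypertree V E'"
  shows "equivalent V E E' \<longleftrightarrow> (hyper_op V)\<^sup>*\<^sup>* E E'"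
proof
  assume eq: "equivalent V E E'"
  have "canon V E = canon V E'" using eq by (simp add: equivalent_def canon_def)
  moreover have "(hyper_op V)\<^sup>*\<^sup>* E (mset_set (canon V E))" using to_canon[OF assms(1)] .
  moreover have "(hyper_op V)\<^sup>*\<^sup>* (mset_set (canon V E')) E'"
    using chain_sym[OF to_canon[OF assms(2)]] assms(2) by (simp add: hypertree_def)
  ultimately show "(hyper_op V)\<^sup>*\<^sup>* E E'" by (metis rtranclp_trans)
next
  assume c: "(hyper_op V)\<^sup>*\<^sup>* E E'"
  have "hypergraph V E" using assms(1) by (simp add: hypertree_def)
  then have "\<forall>T. host_tree V E T \<longleftrightarrow> host_tree V E' T"
    using chain_pres[OF c] by blast
  then show "equivalent V E E'" by (simp add: equivalent_def)
qed


end
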